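(* Let $m,n,\ell\in\mathbb N$ and $M\in{\rm Mat}_m(\mathbb Z)$. Let $S$ be the set of all vertices of $\Gamma_{M,\,n}$ lying on directed cycles of length dividing $\ell$. Then any $\mathbb Z$-linear combination of vertices from $S$ is a vertex lying on a directed cycle of length dividing $\ell$. Moreover, if $M$ has finite $\mathbb Z_n$-order, then for any ${\bf x}\in S$ and any $s\in\mathbb Z$ with $\gcd(s,n)=1$, the vertices ${\bf x}$ and $s{\bf x}$ lie on directed cycles of equal length.
   Context: $\mathbb N$ is the set of positive integers and $\mathbb Z_n$ the integers modulo $n$. For $M\in{\rm Mat}_m(\mathbb Z)$, the move graph $\Gamma_{M,\,n}$ is the directed graph with vertex set $\mathbb Z_n^m$ and arc set $\{({\bf x},{\bf y}) : {\bf y}^T=M{\bf x}^T \text{ in } \mathbb Z_n^m\}$ (loops allowed). The $\mathbb Z_n$-order of $M$ is the least positive integer $k$ (if it exists) such that $M^k$ acts as the identity on $\mathbb Z_n^m$. A directed cycle is a cycle in the underlying undirected graph such that in the induced directed subgraph on it every vertex has in-degree and out-degree $1$; a loop counts as a directed $1$-cycle and a pair of opposite arcs as a directed $2$-cycle. *)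

theory Defs
  imports "HOL-Analysis.Analysis"
begin

text \<open>The vertex set Z_n^m of the move graph, represented by canonical
  representatives: integer vectors (indexed by a finite type of cardinality m)
  with all entries in {0..n-1}.\<close>
definition vertices :: "nat \<Rightarrow> (int ^ 'm) set" where
  "vertices n = {x. \<forall>i. 0 \<le> x $ i \<and> x $ i < int n}"

definition vred :: "nat \<Rightarrow> int ^ 'm \<Rightarrow> int ^ 'm" where
  "vred n x = (\<chi> i. x $ i mod int n)"

definition move :: "int ^ 'm ^ 'm \<Rightarrow> nat \<Rightarrow> int ^ 'm \<Rightarrow> int ^ 'm" where
  "move M n x = vred n (M *v x)"

definition arc :: "int ^ 'm ^ 'm \<Rightarrow> nat \<Rightarrow> int ^ 'm \<Rightarrow> int ^ 'm \<Rightarrow> bool" where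
  "arc M n x y \<longleftrightarrow> x \<in> vertices n \<and> y \<in> vertices n \<and> y = move M n x"

text \<open>A directed cycle, given as the cyclic list of its (distinct) vertices
  v_0, ..., v_{k-1} with arcs v_i -> v_{i+1 mod k}; in the induced directed
  subgraph every vertex has in-degree and out-degree 1. A loop is a directed
  1-cycle, a pair of opposite arcs a directed 2-cycle.\<close>
definition directed_cycle :: "int ^ 'm ^ 'm \<Rightarrow> nat \<Rightarrow> (int ^ 'm) list \<Rightarrow> bool" where
  "directed_cycle M n c \<longleftrightarrow>
     c \<noteq> [] \<and> distinct c \<and> set c \<subseteq> vertices n \<and>
     (\<forall>i < length c. arc M n (c ! i) (c ! ((i + 1) mod length c))) \<and>
     (\<forall>v \<in> set c. card {w \<in> set c. arc M n v w} = 1 \<and> card {w \<in> set c. arc M n w v} = 1)"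

definition finite_Zn_order :: "int ^ 'm ^ 'm \<Rightarrow> nat \<Rightarrow> bool" where
  "finite_Zn_order M n \<longleftrightarrow> (\<exists>k > 0. \<forall>x \<in> vertices n. (move M n ^^ k) x = x)"

definition cyc_set :: "int ^ 'm ^ 'm \<Rightarrow> nat \<Rightarrow> nat \<Rightarrow> (int ^ 'm) set" where
  "cyc_set M n l = {x \<in> vertices n. \<exists>c. directed_cycle M n c \<and> x \<in> set c \<and> length c dvd l}"

end

theory Submission imports Defs "HOL-Number_Theory.Cong" begin

lemma vred_idem: "x \<in> vertices n \<Longrightarrow> vred n x = x"
  by (simp add: vred_def vertices_def vec_eq_iff)

lemma vred_in: "n \<ge> 1 \<Longrightarrow> vred n x \<in> vertices n"
  by (simp add: vred_def vertices_def)

lemma vred_mv: "vred n (M *v vred n x) = vred n (M *v x)"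
proof -
  have "(\<Sum>j\<in>UNIV. M $ i $ j * (x $ j mod int n)) mod int n = (\<Sum>j\<in>UNIV. M $ i $ j * x $ j) mod int n" for i
  proof -
    have "(\<Sum>j\<in>UNIV. M $ i $ j * (x $ j mod int n)) mod int n = (\<Sum>j\<in>UNIV. (M $ i $ j * (x $ j mod int n)) mod int n) mod int n"
      by (simp add: mod_sum_eq)
    also have "\<dots> = (\<Sum>j\<in>UNIV. (M $ i $ j * x $ j) mod int n) mod int n"
      by (simp add: mod_mult_right_eq)
    also have "\<dots> = (\<Sum>j\<in>UNIV. M $ i $ j * x $ j) mod int n"
      by (simp add: mod_sum_eq)
    finally show ?thesis .
  qed
  then show ?thesis by (simp add: vred_def vec_eq_iff matrix_vector_mult_def)
qed

lemma vred_smult: "vred n (c *s vred n x) = vred n (c *s x)"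
  by (simp add: vred_def vec_eq_iff mod_mult_right_eq)

lemma vred_sum: "vred n (\<Sum>x\<in>A. vred n (h x)) = vred n (\<Sum>x\<in>A. h x)"
  by (simp add: vred_def vec_eq_iff mod_sum_eq)

lemma iter_vred: "(move M n ^^ j) (vred n x) = vred n (((*v) M ^^ j) x)"
  by (induction j) (simp_all add: move_def vred_mv)

lemma mv_sum: fixes M :: "int^'m^'m" shows "M *v (\<Sum>x\<in>A. a x *s h x) = (\<Sum>x\<in>A. a x *s (M *v h x))"
  apply (simp add: vec_eq_iff matrix_vector_mult_def sum_distrib_left)
  apply (subst sum.swap)
  apply (intro allI sum.cong refl)
  apply (simp add: mult_ac)
  done

lemma iter_sum: fixes M :: "int^'m^'m" shows "((*v) M ^^ j) (\<Sum>x\<in>A. a x *s h x) = (\<Sum>x\<in>A. a x *s ((*v) M ^^ j) (h x))"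
  by (induction j) (simp_all add: mv_sum)

lemma invar:
  fixes M :: "int^'m^'m"
  assumes "A \<subseteq> vertices n" "\<forall>x\<in>A. (move M n ^^ j) x = x"
  shows "(move M n ^^ j) (vred n (\<Sum>x\<in>A. a x *s x)) = vred n (\<Sum>x\<in>A. a x *s x)"
proof -
  have "(move M n ^^ j) (vred n (\<Sum>x\<in>A. a x *s x)) = vred n (\<Sum>x\<in>A. a x *s ((*v) M ^^ j) x)"
    using iter_vred[where M=M and n=n and j=j] iter_sum[where M=M and j=j and a=a and h=id and A=A] by simp
  also have "\<dots> = vred n (\<Sum>x\<in>A. vred n (a x *s ((*v) M ^^ j) x))"
    by (simp add: vred_sum)
  also have "\<dots> = vred n (\<Sum>x\<in>A. vred n (a x *s x))"
  proof -
    have "vred n (a x *s ((*v) M ^^ j) x) = vred n (a x *s x)" if "x \<in> A" for x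
    proof -
      have "vred n (((*v) M ^^ j) x) = x"
        using iter_vred[where M=M and n=n and j=j and x=x] assms that vred_idem by (metis subsetD)
      then show ?thesis using vred_smult[of n "a x" "((*v) M ^^ j) x"] by simp
    qed
    then show ?thesis by (simp cong: sum.cong)
  qed
  also have "\<dots> = vred n (\<Sum>x\<in>A. a x *s x)" by (simp add: vred_sum)
  finally show ?thesis .
qed


lemma move_in: "n \<ge> 1 \<Longrightarrow> move M n x \<in> vertices n"
  by (simp add: move_def vred_in)

lemma cycle_intro:
  assumes "n \<ge> 1" "c \<noteq> []" "distinct c" "set c \<subseteq> vertices n"
    "\<forall>i<length c. c!((i+1) mod length c) = move M n (c!i)"
  shows "directed_cycle M n c"
proof -
  let ?f = "move M n" and ?k = "length c"
  have kpos: "?k > 0" using assms(2) by simp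
  have arcs: "\<forall>i<?k. arc M n (c!i) (c!((i+1) mod ?k))"
  proof (intro allI impI)
    fix i assume i: "i < ?k"
    have "c!((i+1) mod ?k) \<in> vertices n" "c!i \<in> vertices n"
      using assms(4) i kpos by (meson nth_mem mod_less_divisor subsetD)+
    then show "arc M n (c!i) (c!((i+1) mod ?k))" using assms(5) i by (simp add: arc_def)
  qed
  have sub: "?f v \<in> set c" if vin: "v \<in> set c" for v
  proof -
    obtain i where "i < ?k" "c!i = v" using vin in_set_conv_nth[of v c] by blast
    then show ?thesis using assms(5) kpos by (metis mod_less_divisor nth_mem)
  qed
  have sup: "\<exists>w\<in>set c. ?f w = v" if vin: "v \<in> set c" for v
  proof -
    obtain j where j: "j < ?k" "v = c!j" using vin in_set_conv_nth[of v c] by metis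
    show ?thesis
    proof (cases "j = 0")
      case True
      have lt: "?k - 1 < ?k" using kpos by simp
      have e: "((?k - 1) + 1) mod ?k = 0" using kpos by simp
      have "c!(((?k - 1) + 1) mod ?k) = ?f (c!(?k - 1))" using assms(5) lt by blast
      then have "?f (c!(?k - 1)) = c!0" using e by simp
      then show ?thesis using True j kpos by (metis diff_less nth_mem zero_less_one)
    next
      case False
      have "c!(((j - 1) + 1) mod ?k) = ?f (c!(j - 1))" using assms(5) j by simp
      then have "?f (c!(j - 1)) = c!j" using False j by simp
      then show ?thesis using j by (metis less_imp_diff_less nth_mem)
    qed
  qed
  have img: "?f ` set c = set c" using sub sup by blast
  have inj: "inj_on ?f (set c)"
    by (rule eq_card_imp_inj_on) (simp_all add: img)
  have deg: "card {w \<in> set c. arc M n v w} = 1 \<and> card {w \<in> set c. arc M n w v} = 1"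
    if v: "v \<in> set c" for v
  proof
    have "{w \<in> set c. arc M n v w} = {?f v}"
      using v sub assms(4) by (auto simp: arc_def)
    then show "card {w \<in> set c. arc M n v w} = 1" by simp
  next
    obtain w0 where w0: "w0 \<in> set c" "?f w0 = v" using sup v by blast
    have "{w \<in> set c. arc M n w v} = {w0}"
      using w0 v assms(4) inj by (auto simp: arc_def inj_on_def)
    then show "card {w \<in> set c. arc M n w v} = 1" by simp
  qed
  show ?thesis using assms arcs deg by (simp add: directed_cycle_def)
qed

lemma cycle_iter:
  assumes "directed_cycle M n c" "i < length c"
  shows "(move M n ^^ j) (c!i) = c!((i+j) mod length c)"
proof (induction j)
  case 0
  have "i mod length c = i" by (rule mod_less[OF assms(2)])
  then show ?case by simp
next
  case (Suc j)
  have kpos: "length c > 0" using assms(2) by (rule order.strict_trans1[rotated]) simp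
  have step: "c!((q+1) mod length c) = move M n (c!q)" if "q < length c" for q
  proof -
    have "\<forall>i < length c. arc M n (c ! i) (c ! ((i + 1) mod length c))"
      using assms(1) unfolding directed_cycle_def by (elim conjE)
    then have "arc M n (c!q) (c!((q+1) mod length c))" using that by blast
    then show ?thesis by (simp add: arc_def)
  qed
  have "(move M n ^^ Suc j) (c!i) = move M n (c!((i+j) mod length c))"
    using Suc by simp
  also have "\<dots> = c!(((i+j) mod length c + 1) mod length c)"
    using step kpos by simp
  also have "((i+j) mod length c + 1) mod length c = (i + Suc j) mod length c"
    by (simp add: mod_Suc_eq)
  finally show ?case .
qed

lemma cycle_period1:
  assumes "directed_cycle M n c" "x \<in> set c"
  shows "(move M n ^^ length c) x = x"
proof -
  obtain i where "i < length c" "x = c!i" using assms(2) by (auto simp: in_set_conv_nth)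
  then show ?thesis using cycle_iter[OF assms(1)] by simp
qed

lemma cycle_period2:
  assumes "directed_cycle M n c" "x \<in> set c" "(move M n ^^ j) x = x"
  shows "length c dvd j"
proof -
  obtain i where i: "i < length c" "x = c!i" using assms(2) by (auto simp: in_set_conv_nth)
  have d: "distinct c" using assms(1) by (simp add: directed_cycle_def)
  have "c!((i+j) mod length c) = c!i" using cycle_iter[OF assms(1) i(1)] assms(3) i by simp
  then have "(i+j) mod length c = i"
    using nth_eq_iff_index_eq[OF d] i(1) by (metis mod_less_divisor gr_implies_not0 neq0_conv)
  then have "[i + j = i] (mod length c)" using i(1) by (simp add: cong_def)
  then show ?thesis by (simp add: cong_add_lcancel_0_nat cong_0_iff)
qed

lemma funpow_fix_mult: "(f ^^ m) x = x \<Longrightarrow> (f ^^ (m * q)) x = x"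
proof (induction q)
  case 0 then show ?case by simp
next
  case (Suc q)
  have "(f ^^ (m * Suc q)) x = (f ^^ m) ((f ^^ (m * q)) x)"
    by (simp add: funpow_add mult_Suc_right)
  then show ?case using Suc by simp
qed

lemma iter_in: "n \<ge> 1 \<Longrightarrow> x \<in> vertices n \<Longrightarrow> (move M n ^^ i) x \<in> vertices n"
  by (induction i) (simp_all add: move_in)

lemma orbit_cycle:
  assumes "n \<ge> 1" "x \<in> vertices n" "k > 0" "(move M n ^^ k) x = x"
  shows "\<exists>c. directed_cycle M n c \<and> x \<in> set c \<and> length c dvd k"
proof -
  let ?f = "move M n"
  define p where "p = (LEAST p. p > 0 \<and> (?f ^^ p) x = x)"
  have pp: "p > 0 \<and> (?f ^^ p) x = x"
    unfolding p_def by (rule LeastI[of _ k]) (use assms in simp)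
  have pmin: "\<And>q. 0 < q \<Longrightarrow> q < p \<Longrightarrow> (?f ^^ q) x \<noteq> x"
    unfolding p_def using not_less_Least by blast
  define c where "c = map (\<lambda>i. (?f ^^ i) x) [0..<p]"
  have len: "length c = p" by (simp add: c_def)
  have nth: "\<And>i. i < p \<Longrightarrow> c!i = (?f ^^ i) x" by (simp add: c_def)
  have ne: "c \<noteq> []" using pp by (simp add: c_def)
  have dist: "distinct c"
  proof -
    have "(?f ^^ i) x \<noteq> (?f ^^ j) x" if "i < j" "j < p" for i j
    proof
      assume eq: "(?f ^^ i) x = (?f ^^ j) x"
      have "(?f ^^ (p - j + i)) x = (?f ^^ (p - j)) ((?f ^^ i) x)" by (simp add: funpow_add)
      also have "\<dots> = (?f ^^ (p - j)) ((?f ^^ j) x)" using eq by simp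
      also have "\<dots> = (?f ^^ (p - j + j)) x" by (simp add: funpow_add)
      also have "\<dots> = x" using pp that by simp
      moreover have "p - j + i < p" "0 < p - j + i" using that by auto
      ultimately show False using pmin[of "p - j + i"] by simp
    qed
    then show ?thesis unfolding distinct_conv_nth len
      by (metis nth linorder_neqE_nat)
  qed
  have sub: "set c \<subseteq> vertices n" using iter_in[OF assms(1,2)] by (auto simp: c_def)
  have step: "\<forall>i<length c. c!((i+1) mod length c) = ?f (c!i)"
  proof (intro allI impI)
    fix i assume i: "i < length c"
    show "c!((i+1) mod length c) = ?f (c!i)"
    proof (cases "i + 1 < p")
      case True then show ?thesis using i len nth by simp
    next
      case False
      then have ip: "i + 1 = p" using i len by simp
      have "?f (c!i) = (?f ^^ Suc i) x" using i len nth by simp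
      also have "\<dots> = x" using ip pp by simp
      finally show ?thesis using ip len nth pp by simp
    qed
  qed
  have cyc: "directed_cycle M n c" by (rule cycle_intro[OF assms(1) ne dist sub step])
  have xin: "x \<in> set c" using nth[of 0] pp len by (metis funpow_0 nth_mem)
  show ?thesis using cyc xin cycle_period2[OF cyc xin assms(4)] by blast
qed

lemma cyc_char:
  assumes "n \<ge> 1" "l \<ge> 1"
  shows "x \<in> cyc_set M n l \<longleftrightarrow> x \<in> vertices n \<and> (move M n ^^ l) x = x"
proof
  assume "x \<in> cyc_set M n l"
  then obtain c where c: "x \<in> vertices n" "directed_cycle M n c" "x \<in> set c" "length c dvd l"
    by (auto simp: cyc_set_def)
  then obtain q where "l = length c * q" by (auto simp: dvd_def)
  then show "x \<in> vertices n \<and> (move M n ^^ l) x = x"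
    using c funpow_fix_mult cycle_period1 by metis
next
  assume "x \<in> vertices n \<and> (move M n ^^ l) x = x"
  then show "x \<in> cyc_set M n l" using orbit_cycle[of n x l M] assms by (auto simp: cyc_set_def)
qed


lemma scal_fix:
  fixes M :: "int^'m^'m"
  assumes "x \<in> vertices n" "(move M n ^^ j) x = x"
  shows "(move M n ^^ j) (vred n (s *s x)) = vred n (s *s x)"
  using invar[where M=M and n=n and j=j and A="{x}" and a="\<lambda>_. s"] assms by simp

theorem proposition3p2:
  fixes M :: "int ^ 'm ^ 'm" and n l :: nat
  assumes "n \<ge> 1" and "l \<ge> 1"
  shows "(\<forall>(A :: (int ^ 'm) set) (a :: int ^ 'm \<Rightarrow> int).
            finite A \<longrightarrow> A \<subseteq> cyc_set M n l \<longrightarrow>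
            vred n (\<Sum>x\<in>A. a x *s x) \<in> cyc_set M n l)
       \<and> (finite_Zn_order M n \<longrightarrow>
            (\<forall>x \<in> cyc_set M n l. \<forall>s :: int. gcd s (int n) = 1 \<longrightarrow>
              (\<exists>c1 c2. directed_cycle M n c1 \<and> directed_cycle M n c2 \<and>
                 x \<in> set c1 \<and> vred n (s *s x) \<in> set c2 \<and> length c1 = length c2)))"
proof (intro conjI allI impI ballI)
  fix A :: "(int ^ 'm) set" and a :: "int ^ 'm \<Rightarrow> int"
  assume "finite A" "A \<subseteq> cyc_set M n l"
  then have "A \<subseteq> vertices n" "\<forall>x\<in>A. (move M n ^^ l) x = x"
    using cyc_char[OF assms] by auto
  then show "vred n (\<Sum>x\<in>A. a x *s x) \<in> cyc_set M n l"
    using invar[where M=M and n=n and j=l and A=A and a=a] cyc_char[where M=M and x="vred n (\<Sum>x\<in>A. a x *s x)", OF assms] vred_in[OF assms(1)]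
    by auto
next
  fix x s
  assume xc: "x \<in> cyc_set M n l" and g: "gcd s (int n) = 1"
  obtain c1 where c1: "directed_cycle M n c1" "x \<in> set c1" and xv: "x \<in> vertices n"
    using xc by (auto simp: cyc_set_def)
  define y where "y = vred n (s *s x)"
  have yv: "y \<in> vertices n" unfolding y_def by (rule vred_in[OF assms(1)])
  have k1pos: "length c1 > 0" using c1 by (auto simp: directed_cycle_def)
  have "(move M n ^^ length c1) y = y"
    unfolding y_def by (rule scal_fix[OF xv cycle_period1[OF c1]])
  then obtain c2 where c2: "directed_cycle M n c2" "y \<in> set c2" "length c2 dvd length c1"
    using orbit_cycle[OF assms(1) yv k1pos] by blast
  obtain u v where uv: "u * s + v * int n = 1" using bezout_int[of s "int n"] g by auto
  have xy: "vred n (u *s y) = x"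
  proof -
    have "vred n (u *s y) = vred n (u *s (s *s x))" unfolding y_def by (rule vred_smult)
    also have "\<dots> = vred n x"
    proof -
      have "(u * (s * x $ i)) mod int n = x $ i mod int n" for i
      proof -
        have h: "u * (s * x $ i) = x $ i + (- v * x $ i) * int n"
          using uv by (simp add: algebra_simps) (metis add_diff_cancel_left' mult.commute mult.left_commute mult_1 distrib_right)
        show ?thesis by (simp only: h mod_mult_self1)
      qed
      then show ?thesis by (simp add: vred_def vec_eq_iff mult.assoc)
    qed
    also have "\<dots> = x" by (rule vred_idem[OF xv])
    finally show ?thesis .
  qed
  have "(move M n ^^ length c2) x = x"
    using scal_fix[OF yv cycle_period1[OF c2(1,2)], of u] xy by simp
  then have "length c1 dvd length c2" by (rule cycle_period2[OF c1])
  then have "length c1 = length c2" using c2(3) by (simp add: dvd_antisym)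
  then show "\<exists>c1 c2. directed_cycle M n c1 \<and> directed_cycle M n c2 \<and>
                 x \<in> set c1 \<and> vred n (s *s x) \<in> set c2 \<and> length c1 = length c2"
    using c1 c2 unfolding y_def by blast
qed

end
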